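(* Assume $\Omega^*\neq\emptyset$, let $\sigma\in[0,c]$, and let an initial point $\omega_0$ be given. Then there exist parameters $(W_k,\theta_k,\beta_k)\in\mathcal{S}(\sigma,A)$, $k\ge0$, such that for the sequence $\{\omega_k\}$ generated by the iteration below, the quantity $\operatorname{dist}^2_{\mathcal{H}_k}(\omega_k,\Omega^* )$ decreases monotonically in $k$ for all sufficiently large $k$.
   Context: Let $A\in\mathbb{R}^{m\times d}$, $X\in\mathbb{R}^{m\times n}$, and let $f:\mathbb{R}^{d\times n}\to\mathbb{R}$, $g:\mathbb{R}^{m\times n}\to\mathbb{R}$ be convex. Consider the problem $\min_{Z,E} f(Z)+g(E)$ subject to $X=AZ+E$. Triples are written $\omega=(Z,E,-\lambda)$ with $\lambda\in\mathbb{R}^{m\times n}$ a Lagrange multiplier; the inner product of triples is the sum of componentwise Frobenius inner products. $\Omega^*$ is the solution set: the set of $\omega^*=(Z^*,E^*,-\lambda^* )$ with $0\in\partial f(Z^* )+A^\top\lambda^*$, $0\in\partial g(E^* )+\lambda^*$, $AZ^*+E^*=X$. $\circ$ is the Hadamard product; $\beta^{-1}$ is the entrywise reciprocal; $\tfrac{\theta}{2}\circ\|M\|_F^2:=\tfrac12\sum_{ij}\theta_{ij}M_{ij}^2$. Iteration (D-LADMM), with parameters $W_k\in\mathbb{R}^{m\times d}$, $\theta_k\in\mathbb{R}^{d\times n}$, $\beta_k\in\mathbb{R}^{m\times n}$: $Z_{k+1}=\arg\min_Z\{ f(Z)+\tfrac{\theta_k}{2}\circ\|Z-Z_k+\theta_k^{-1}\circ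 W_k^\top(\lambda_k+\beta_k\circ(AZ_k+E_k-X))\|_F^2\}$, $E_{k+1}=\arg\min_E\{g(E)+\tfrac{\beta_k}{2}\circ\|E-X+AZ_{k+1}+\beta_k^{-1}\circ\lambda_k\|_F^2\}$, $\lambda_{k+1}=\lambda_k+\beta_k\circ(AZ_{k+1}+E_{k+1}-X)$. $\mathcal{D}_k(Z)=\theta_k\circ Z-W_k^\top(\beta_k\circ(AZ))$; $\mathcal{H}_k(Z,E,-\lambda)=(\mathcal{D}_k(Z),\ \beta_k\circ E,\ \beta_k^{-1}\circ(-\lambda))$; $\|\omega\|_{\mathcal{H}}^2=\langle\omega,\mathcal{H}(\omega)\rangle$; $\operatorname{dist}^2_{\mathcal{H}}(\omega,\Omega^* )=\min_{\omega^*\in\Omega^*}\|\omega-\omega^*\|^2_{\mathcal{H}}$. $\mathcal{S}(\sigma,A)$ is the set of $(W,\theta,\beta)$ with $\|W-A\|\le\sigma$ (spectral norm), $\theta,\beta$ entrywise positive, and $Z\mapsto\theta\circ Z-W^\top(\beta\circ(AZ))$ positive definite ($\langle\cdot(Z),Z\rangle>0$ for $Z\neq0$). Standing assumption: there is a constant $c$ such that $\mathcal{S}(\sigma,A)\ne\emptyset$ for all $0\le\sigma\le c$. *)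

theory Defs
  imports "HOL-Analysis.Analysis"
begin

text \<open>Matrices in R^(r x c) are rendered as real^'c^'r (rows indexed by 'r).
  The Frobenius inner product is the library inner product on nested vectors.\<close>

definition had :: "real^'c^'r \<Rightarrow> real^'c^'r \<Rightarrow> real^'c^'r" where
  "had P Q = (\<chi> i j. P$i$j * Q$i$j)"

definition recip :: "real^'c^'r \<Rightarrow> real^'c^'r" where
  "recip P = (\<chi> i j. 1 / P$i$j)"

definition wsq :: "real^'c^'r \<Rightarrow> real^'c^'r \<Rightarrow> real" where
  "wsq th M = (1/2) * (\<Sum>i\<in>UNIV. \<Sum>j\<in>UNIV. th$i$j * (M$i$j)^2)"

definition subgrad :: "('a::real_inner \<Rightarrow> real) \<Rightarrow> 'a \<Rightarrow> 'a set" where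
  "subgrad f x = {s. \<forall>y. f x + inner s (y - x) \<le> f y}"

definition Dop :: "real^'d^'m \<Rightarrow> real^'n^'d \<Rightarrow> real^'n^'m \<Rightarrow> real^'d^'m
                   \<Rightarrow> real^'n^'d \<Rightarrow> real^'n^'d" where
  "Dop W th be A Z = had th Z - transpose W ** had be (A ** Z)"

text \<open>S(sigma, A); spectral norm = operator norm of the induced linear map\<close>
definition Sset :: "real \<Rightarrow> real^'d^'m
                    \<Rightarrow> ((real^'d^'m) \<times> (real^'n^'d) \<times> (real^'n^'m)) set" where
  "Sset \<sigma> A = {(W, th, be).
      onorm (\<lambda>x. (W - A) *v x) \<le> \<sigma> \<and>
      (\<forall>i j. th$i$j > 0) \<and> (\<forall>i j. be$i$j > 0) \<and>
      (\<forall>Z. Z \<noteq> 0 \<longrightarrow> inner (Dop W th be A Z) Z > 0)}"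

text \<open>Solution set Omega*, stored as triples (Z*, E*, -lambda*).
  0 \<in> df(Z*) + A^T lambda*  iff  -A^T lambda* \<in> df(Z*); similarly for g.\<close>
definition solset :: "(real^'n^'d \<Rightarrow> real) \<Rightarrow> (real^'n^'m \<Rightarrow> real) \<Rightarrow> real^'d^'m
                      \<Rightarrow> real^'n^'m \<Rightarrow> ((real^'n^'d) \<times> (real^'n^'m) \<times> (real^'n^'m)) set" where
  "solset f g A X = {(Z, E, NL). \<exists>L. NL = - L \<and>
      - (transpose A ** L) \<in> subgrad f Z \<and> - L \<in> subgrad g E \<and> A ** Z + E = X}"

definition Hnorm2 :: "real^'d^'m \<Rightarrow> real^'n^'d \<Rightarrow> real^'n^'m \<Rightarrow> real^'d^'m
                      \<Rightarrow> (real^'n^'d) \<times> (real^'n^'m) \<times> (real^'n^'m) \<Rightarrow> real" where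
  "Hnorm2 W th be A w = (case w of (Z, E, NL) \<Rightarrow>
      inner Z (Dop W th be A Z) + inner E (had be E) + inner NL (had (recip be) NL))"

definition distH2 :: "real^'d^'m \<Rightarrow> real^'n^'d \<Rightarrow> real^'n^'m \<Rightarrow> real^'d^'m
                      \<Rightarrow> ((real^'n^'d) \<times> (real^'n^'m) \<times> (real^'n^'m)) set
                      \<Rightarrow> (real^'n^'d) \<times> (real^'n^'m) \<times> (real^'n^'m) \<Rightarrow> real" where
  "distH2 W th be A \<Omega> w = Inf ((\<lambda>ws. Hnorm2 W th be A (w - ws)) ` \<Omega>)"

definition dladmm_step :: "(real^'n^'d \<Rightarrow> real) \<Rightarrow> (real^'n^'m \<Rightarrow> real) \<Rightarrow> real^'d^'m
      \<Rightarrow> real^'n^'m \<Rightarrow> real^'d^'m \<Rightarrow> real^'n^'d \<Rightarrow> real^'n^'m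
      \<Rightarrow> real^'n^'d \<Rightarrow> real^'n^'m \<Rightarrow> real^'n^'m
      \<Rightarrow> real^'n^'d \<Rightarrow> real^'n^'m \<Rightarrow> real^'n^'m \<Rightarrow> bool" where
  "dladmm_step f g A X W th be Z E L Z' E' L' \<longleftrightarrow>
     (\<forall>Y. f Z' + wsq th (Z' - Z + had (recip th) (transpose W ** (L + had be (A ** Z + E - X))))
          \<le> f Y + wsq th (Y - Z + had (recip th) (transpose W ** (L + had be (A ** Z + E - X))))) \<and>
     (\<forall>Y. g E' + wsq be (E' - X + A ** Z' + had (recip be) L)
          \<le> g Y + wsq be (Y - X + A ** Z' + had (recip be) L)) \<and>
     L' = L + had be (A ** Z' + E' - X)"

end

theory Submission
  imports Defs
begin

lemma inner_mat: "inner (P::real^'c::finite^'r::finite) Q = (\<Sum>i\<in>UNIV. \<Sum>j\<in>UNIV. P$i$j * Q$i$j)"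
  by (simp add: inner_vec_def)

lemma had_nth[simp]: "had P Q $ i $ j = P$i$j * Q$i$j" by (simp add: had_def)
lemma recip_nth[simp]: "recip P $ i $ j = 1 / P$i$j" by (simp add: recip_def)

lemma inner_had_sym: "inner (had p x) (y::real^'c::finite^'r::finite) = inner x (had p y)"
  by (simp add: inner_mat mult.commute mult.left_commute)
lemma had_add: "had p (x + y) = had p x + had p y" by (simp add: vec_eq_iff algebra_simps)
lemma had_diff: "had p (x - y) = had p x - had p y" by (simp add: vec_eq_iff algebra_simps)
lemma had_minus: "had p (- y) = - had p y" by (simp add: vec_eq_iff algebra_simps)
lemma had_recip: "\<forall>i j. p$i$j > (0::real) \<Longrightarrow> had p (had (recip p) x) = x"
  by (simp add: vec_eq_iff) (metis order_less_irrefl)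
lemma recip_had: "\<forall>i j. p$i$j > (0::real) \<Longrightarrow> had (recip p) (had p x) = x"
  by (simp add: vec_eq_iff) (metis order_less_irrefl)

lemma mat_diff: "(A::real^'a::finite^'b::finite) ** (B - C) = A ** B - A ** C"
  by (simp add: matrix_matrix_mult_def vec_eq_iff sum_subtractf algebra_simps)
lemma mat_add: "(A::real^'a::finite^'b::finite) ** (B + C) = A ** B + A ** C"
  by (rule matrix_add_ldistrib)

lemma inner_transpose:
  "inner (transpose (A::real^'d::finite^'m::finite) ** (Y::real^'n::finite^'m)) Z = inner Y (A ** Z)"
proof -
  have "inner (transpose A ** Y) Z = (\<Sum>i\<in>UNIV. \<Sum>j\<in>UNIV. \<Sum>k\<in>UNIV. A$k$i * Y$k$j * Z$i$j)"
    by (simp add: inner_mat matrix_matrix_mult_def transpose_def sum_distrib_right)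
  also have "\<dots> = (\<Sum>k\<in>UNIV. \<Sum>j\<in>UNIV. \<Sum>i\<in>UNIV. A$k$i * Y$k$j * Z$i$j)"
  proof -
    have "(\<Sum>i\<in>UNIV. \<Sum>j\<in>UNIV. \<Sum>k\<in>UNIV. A$k$i * Y$k$j * Z$i$j)
        = (\<Sum>i\<in>UNIV. \<Sum>k\<in>UNIV. \<Sum>j\<in>UNIV. A$k$i * Y$k$j * Z$i$j)"
      by (rule sum.cong[OF refl], rule sum.swap)
    also have "\<dots> = (\<Sum>k\<in>UNIV. \<Sum>i\<in>UNIV. \<Sum>j\<in>UNIV. A$k$i * Y$k$j * Z$i$j)"
      by (rule sum.swap)
    also have "\<dots> = (\<Sum>k\<in>UNIV. \<Sum>j\<in>UNIV. \<Sum>i\<in>UNIV. A$k$i * Y$k$j * Z$i$j)"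
      by (rule sum.cong[OF refl], rule sum.swap)
    finally show ?thesis .
  qed
  also have "\<dots> = inner Y (A ** Z)"
    by (simp add: inner_mat matrix_matrix_mult_def sum_distrib_left mult.commute mult.left_commute)
  finally show ?thesis .
qed

lemma wsq_expand:
  "wsq w ((M::real^'c::finite^'r::finite) + t *\<^sub>R N) = wsq w M + t * inner (had w M) N + t^2 * wsq w N"
  by (simp add: wsq_def inner_mat power2_eq_square algebra_simps sum.distrib sum_distrib_left)

lemma prox:
  fixes f :: "real^'c::finite^'r::finite \<Rightarrow> real"
  assumes cf: "convex_on UNIV f" and opt: "\<forall>Y. f x + wsq w (x + u) \<le> f Y + wsq w (Y + u)"
  shows "f x - inner (had w (x + u)) (Y - x) \<le> f Y"
proof (rule ccontr)
  define a where "a = f Y - f x + inner (had w (x + u)) (Y - x)"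
  define q where "q = wsq w (Y - x)"
  assume "\<not> ?thesis"
  then have a0: "a < 0" by (simp add: a_def)
  have key: "0 \<le> a + t * q" if t0: "0 < t" and t1: "t \<le> 1" for t
  proof -
    define yt where "yt = (1 - t) *\<^sub>R x + t *\<^sub>R Y"
    have e: "yt + u = (x + u) + t *\<^sub>R (Y - x)" by (simp add: yt_def algebra_simps)
    have "wsq w (yt + u) = wsq w (x + u) + t * inner (had w (x + u)) (Y - x) + t^2 * q"
      by (simp only: e wsq_expand q_def)
    then have "f x + wsq w (x + u) \<le> f yt + (wsq w (x + u) + t * inner (had w (x + u)) (Y - x) + t^2 * q)"
      using opt[rule_format, of yt] by linarith
    moreover have "f yt \<le> (1 - t) * f x + t * f Y"
      unfolding yt_def using convex_onD[OF cf, of t x Y] t0 t1 by simp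
    ultimately have "0 \<le> t * (a + t * q)"
      by (simp add: a_def power2_eq_square algebra_simps)
    then show ?thesis using t0 by (simp add: zero_le_mult_iff)
  qed
  define t where "t = min 1 (- a / (2 * (\<bar>q\<bar> + 1)))"
  have "0 < - a / (2 * (\<bar>q\<bar> + 1))"
    by (intro divide_pos_pos) (use a0 in auto)
  then have tp: "0 < t" by (simp add: t_def)
  have t1: "t \<le> 1" by (simp add: t_def)
  have "t * q \<le> t * \<bar>q\<bar>" using tp by (simp add: mult_left_mono)
  also have "\<dots> \<le> (- a / (2 * (\<bar>q\<bar> + 1))) * \<bar>q\<bar>"
    by (rule mult_right_mono) (auto simp: t_def)
  also have "\<dots> \<le> - a / 2"
  proof -
    have "(- a / (2 * (\<bar>q\<bar> + 1))) * \<bar>q\<bar> = (-a/2) * (\<bar>q\<bar> / (\<bar>q\<bar> + 1))" by simp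
    also have "\<dots> \<le> (-a/2) * 1"
      by (rule mult_left_mono) (use a0 in auto)
    finally show ?thesis by simp
  qed
  finally have "a + t * q < 0" using a0 by linarith
  with key[OF tp t1] show False by linarith
qed

lemma Dop_diff: "Dop W th be A (x - y) = Dop W th be A x - Dop W th be A y"
  by (simp add: Dop_def had_diff mat_diff algebra_simps)

lemma inner_transpose2:
  "inner Z (transpose (A::real^'d::finite^'m::finite) ** (Y::real^'n::finite^'m)) = inner (A ** Z) Y"
  by (metis inner_commute inner_transpose)

lemma Dop_sym: "inner (Dop A th be A x) y = inner x (Dop A th be A y)"
  by (simp add: Dop_def inner_diff_left inner_diff_right inner_transpose inner_had_sym)
     (simp add: inner_transpose2)

lemma quadD: "inner (a - d) (Dop A th be A (a - d))
   = inner a (Dop A th be A a) - 2 * inner (Dop A th be A d) a + inner d (Dop A th be A d)"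
  using Dop_sym[of A th be d a] 
  by (simp add: Dop_diff inner_diff_left inner_diff_right inner_commute)

lemma quadH: "inner (a - d) (had p (a - d)) = inner a (had p a) - 2 * inner (had p d) a + inner d (had p d)"
  using inner_had_sym[of p d a]
  by (simp add: had_diff inner_diff_left inner_diff_right inner_commute)

lemma nonnegH: "\<forall>i j. p$i$j > (0::real) \<Longrightarrow> 0 \<le> inner e (had p (e::real^'c::finite^'r::finite))"
proof -
  assume p: "\<forall>i j. p$i$j > (0::real)"
  have "0 \<le> e$i$j * (p$i$j * e$i$j)" for i j
  proof -
    have "e$i$j * (p$i$j * e$i$j) = p$i$j * (e$i$j * e$i$j)" by simp
    moreover have "0 \<le> p$i$j" using p by (simp add: less_imp_le)
    ultimately show ?thesis by (metis mult_nonneg_nonneg zero_le_square)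
  qed
  then show ?thesis by (simp add: inner_mat sum_nonneg)
qed

lemma amgm:
  assumes "\<forall>i j. p$i$j > (0::real)"
  shows "2 * inner e l \<le> inner e (had p (e::real^'c::finite^'r::finite)) + inner l (had (recip p) l)"
proof -
  have "2 * (e$i$j * l$i$j) \<le> e$i$j * (p$i$j * e$i$j) + l$i$j * (1 / p$i$j * l$i$j)" for i j
  proof -
    have pp: "p$i$j > 0" using assms by auto
    have "0 \<le> (p$i$j * e$i$j - l$i$j)^2 / p$i$j" using pp by simp
    also have "\<dots> = e$i$j * (p$i$j * e$i$j) + l$i$j * (1 / p$i$j * l$i$j) - 2 * (e$i$j * l$i$j)"
      using pp by (simp add: power2_eq_square field_simps)
    finally show ?thesis by simp
  qed
  then show ?thesis
    by (simp add: inner_mat sum_distrib_left sum.distrib[symmetric] sum_mono)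
qed

lemma sq_swap: "inner (y - x) (had p (y - x)) = inner (x - y) (had p ((x::real^'c::finite^'r::finite) - y))"
proof -
  have "y - x = - (x - y)" by simp
  then show ?thesis by (simp only: had_minus inner_minus_left inner_minus_right minus_minus)
qed

lemma fejer:
  fixes A :: "real^'d::finite^'m::finite" and X :: "real^'n::finite^'m"
    and f :: "real^'n^'d \<Rightarrow> real" and g :: "real^'n^'m \<Rightarrow> real"
  assumes cf: "convex_on UNIV f" and cg: "convex_on UNIV g"
    and thp: "\<forall>i j. th$i$j > (0::real)" and bep: "\<forall>i j. be$i$j > (0::real)"
    and psd: "\<forall>Z. 0 \<le> inner (Dop A th be A Z) Z"
    and step: "dladmm_step f g A X A th be Z E L Z' E' L'"
    and sol: "ws \<in> solset f g A X"
  shows "Hnorm2 A th be A ((Z', E', - L') - ws) \<le> Hnorm2 A th be A ((Z, E, - L) - ws)"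
proof -
  obtain Zs Es Ls where ws: "ws = (Zs, Es, - Ls)" and sf: "- (transpose A ** Ls) \<in> subgrad f Zs"
    and sg: "- Ls \<in> subgrad g Es" and feas: "A ** Zs + Es = X"
    using sol unfolding solset_def by auto
  define V where "V = transpose A ** (L + had be (A ** Z + E - X))"
  have zst: "\<forall>Y. f Z' + wsq th (Z' - Z + had (recip th) V) \<le> f Y + wsq th (Y - Z + had (recip th) V)"
    and est: "\<forall>Y. g E' + wsq be (E' - X + A ** Z' + had (recip be) L)
          \<le> g Y + wsq be (Y - X + A ** Z' + had (recip be) L)"
    and lup: "L' = L + had be (A ** Z' + E' - X)"
    using step unfolding dladmm_step_def V_def by auto
  define uZ where "uZ = had (recip th) V - Z"
  have eqZ: "\<And>Y. Y - Z + had (recip th) V = Y + uZ" by (simp add: uZ_def algebra_simps)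
  have zst': "\<forall>Y. f Z' + wsq th (Z' + uZ) \<le> f Y + wsq th (Y + uZ)"
  proof
    fix Y show "f Z' + wsq th (Z' + uZ) \<le> f Y + wsq th (Y + uZ)"
      using zst[rule_format, of Y] by (simp only: eqZ)
  qed
  have hZ: "had th (Z' + uZ) = had th (Z' - Z) + V"
  proof -
    have e: "Z' + uZ = (Z' - Z) + had (recip th) V" by (simp add: uZ_def algebra_simps)
    show ?thesis unfolding e had_add had_recip[OF thp] ..
  qed
  have p1: "f Z' - inner (had th (Z' - Z) + V) (Zs - Z') \<le> f Zs"
    using prox[OF cf zst', of Zs] by (simp only: hZ)
  have p2: "f Zs + inner (- (transpose A ** Ls)) (Z' - Zs) \<le> f Z'"
    using sf unfolding subgrad_def by auto
  define uE where "uE = had (recip be) L - X + A ** Z'"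
  have eqE: "\<And>Y. Y - X + A ** Z' + had (recip be) L = Y + uE" by (simp add: uE_def algebra_simps)
  have est': "\<forall>Y. g E' + wsq be (E' + uE) \<le> g Y + wsq be (Y + uE)"
  proof
    fix Y show "g E' + wsq be (E' + uE) \<le> g Y + wsq be (Y + uE)"
      using est[rule_format, of Y] by (simp only: eqE)
  qed
  have hE: "had be (E' + uE) = L'"
  proof -
    have e: "E' + uE = (A ** Z' + E' - X) + had (recip be) L" by (simp add: uE_def algebra_simps)
    show ?thesis unfolding e had_add had_recip[OF bep] lup by (simp add: add.commute)
  qed
  have q1: "g E' - inner L' (Es - E') \<le> g Es"
    using prox[OF cg est', of Es] by (simp only: hE)
  have q2: "g Es + inner (- Ls) (E' - Es) \<le> g E'"
    using sg unfolding subgrad_def by auto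
  define aZ where "aZ = Z' - Zs"
  define dZ where "dZ = Z' - Z"
  define aE where "aE = E' - Es"
  define dE where "dE = E' - E"
  define aL where "aL = L' - Ls"
  define dL where "dL = L' - L"
  have F1: "inner (had th dZ + V) aZ - inner Ls (A ** aZ) \<le> 0"
  proof -
    have "inner (had th dZ + V) (Zs - Z') = - inner (had th dZ + V) aZ"
      by (simp add: aZ_def inner_diff_right)
    moreover have "inner (- (transpose A ** Ls)) (Z' - Zs) = - inner Ls (A ** aZ)"
      by (simp add: aZ_def inner_transpose)
    ultimately show ?thesis using p1 p2 by (simp add: dZ_def)
  qed
  have F2: "inner aL aE \<le> 0"
  proof -
    have "inner L' (Es - E') = - inner L' aE" by (simp add: aE_def inner_diff_right)
    moreover have "inner (- Ls) (E' - Es) = - inner Ls aE" by (simp add: aE_def)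
    ultimately show ?thesis using q1 q2 by (simp add: aL_def inner_diff_left)
  qed
  have Veq: "L + had be (A ** Z + E - X) = L' - had be (A ** dZ) - had be dE"
    by (simp add: vec_eq_iff lup dZ_def dE_def mat_diff algebra_simps)
  have Vin: "inner V aZ = inner L' (A ** aZ) - inner (had be (A ** dZ)) (A ** aZ) - inner (had be dE) (A ** aZ)"
    unfolding V_def Veq by (simp add: inner_transpose inner_diff_left)
  have Din: "inner (Dop A th be A dZ) aZ = inner (had th dZ) aZ - inner (had be (A ** dZ)) (A ** aZ)"
    by (simp add: Dop_def inner_diff_left inner_transpose)
  have F1': "inner (Dop A th be A dZ) aZ + inner aL (A ** aZ) - inner (had be dE) (A ** aZ) \<le> 0"
    using F1 Vin Din by (simp add: aL_def inner_diff_left inner_add_left)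
  have dLe: "dL = had be (A ** aZ + aE)"
  proof -
    have "A ** Z' + E' - X = A ** aZ + aE" by (simp add: aZ_def aE_def mat_diff feas[symmetric] algebra_simps)
    then show ?thesis by (simp add: dL_def lup)
  qed
  have rel: "A ** aZ = had (recip be) dL - aE" by (simp add: dLe recip_had[OF bep])
  have r1: "inner aL (A ** aZ) = inner (had (recip be) dL) aL - inner aL aE"
    by (simp add: rel inner_diff_right inner_commute)
  have r2: "inner (had be dE) (A ** aZ) = inner dE dL - inner (had be dE) aE"
    by (simp add: rel inner_diff_right inner_had_sym had_recip[OF bep])
  have key: "inner (Dop A th be A dZ) aZ + inner (had be dE) aE + inner (had (recip be) dL) aL \<le> inner dE dL"
    using F1' F2 r1 r2 by linarith
  have lhs: "Hnorm2 A th be A ((Z', E', - L') - ws)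
      = inner aZ (Dop A th be A aZ) + inner aE (had be aE) + inner aL (had (recip be) aL)"
  proof -
    have "Z' - Zs = aZ" "E' - Es = aE" "- L' - - Ls = - aL"
      by (simp_all add: aZ_def aE_def aL_def)
    then show ?thesis by (simp add: ws Hnorm2_def had_minus)
  qed
  have rhs: "Hnorm2 A th be A ((Z, E, - L) - ws)
      = inner (aZ - dZ) (Dop A th be A (aZ - dZ)) + inner (aE - dE) (had be (aE - dE))
        + inner (aL - dL) (had (recip be) (aL - dL))"
  proof -
    have "Z - Zs = aZ - dZ" "E - Es = aE - dE" "- L - - Ls = - (aL - dL)"
      by (simp_all add: aZ_def dZ_def aE_def dE_def aL_def dL_def)
    then show ?thesis by (simp add: ws Hnorm2_def had_minus sq_swap[of dL aL])
  qed
  have am: "2 * inner dE dL \<le> inner dE (had be dE) + inner dL (had (recip be) dL)"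
    by (rule amgm[OF bep])
  have pz: "0 \<le> inner dZ (Dop A th be A dZ)" using psd[rule_format, of dZ] by (simp add: inner_commute)
  show ?thesis
    unfolding lhs rhs quadD quadH using key am pz by linarith
qed

lemma Hnorm2_nonneg:
  assumes psd: "\<forall>Z. 0 \<le> inner (Dop A th be A Z) Z" and bep: "\<forall>i j. be$i$j > (0::real)"
  shows "0 \<le> Hnorm2 A th be A w"
proof -
  obtain Z E NL where w: "w = (Z, E, NL)" by (cases w) auto
  have "0 \<le> inner Z (Dop A th be A Z)" using psd[rule_format, of Z] by (simp add: inner_commute)
  moreover have "0 \<le> inner E (had be E)" by (rule nonnegH[OF bep])
  moreover have "0 \<le> inner NL (had (recip be) NL)" by (rule nonnegH) (use bep in simp)
  ultimately show ?thesis by (simp add: w Hnorm2_def)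
qed

lemma AZ_bound:
  fixes A :: "real^'d::finite^'m::finite" and Z :: "real^'n::finite^'d"
  shows "inner (A ** Z) (A ** Z) \<le> (\<Sum>k\<in>UNIV. \<Sum>i\<in>UNIV. (A$k$i)^2) * inner Z Z"
proof -
  have "inner (A ** Z) (A ** Z) = (\<Sum>k\<in>UNIV. \<Sum>j\<in>UNIV. (\<Sum>i\<in>UNIV. A$k$i * Z$i$j)^2)"
    by (simp add: inner_mat matrix_matrix_mult_def power2_eq_square)
  also have "\<dots> \<le> (\<Sum>k\<in>UNIV. \<Sum>j\<in>UNIV. (\<Sum>i\<in>UNIV. (A$k$i)^2) * (\<Sum>i\<in>UNIV. (Z$i$j)^2))"
    by (intro sum_mono Cauchy_Schwarz_ineq_sum)
  also have "\<dots> = (\<Sum>k\<in>UNIV. \<Sum>i\<in>UNIV. (A$k$i)^2) * (\<Sum>j\<in>UNIV. \<Sum>i\<in>UNIV. (Z$i$j)^2)"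
    by (rule sum_product[symmetric])
  also have "(\<Sum>j\<in>UNIV. \<Sum>i\<in>UNIV. (Z$i$j)^2) = inner Z Z"
    unfolding inner_mat power2_eq_square by (rule sum.swap)
  finally show ?thesis .
qed

theorem theorem2:
  fixes A :: "real^'d::finite^'m::finite" and X :: "real^'n::finite^'m"
    and f :: "real^'n^'d \<Rightarrow> real" and g :: "real^'n^'m \<Rightarrow> real"
    and c \<sigma> :: real
    and Z0 :: "real^'n^'d" and E0 :: "real^'n^'m" and L0 :: "real^'n^'m"
  assumes "convex_on UNIV f" and "convex_on UNIV g"
    and "\<forall>s. 0 \<le> s \<and> s \<le> c \<longrightarrow> Sset s A \<noteq> {}"
    and "solset f g A X \<noteq> {}"
    and "0 \<le> \<sigma>" and "\<sigma> \<le> c"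
  shows "\<exists>(Ws :: nat \<Rightarrow> real^'d^'m) (th :: nat \<Rightarrow> real^'n^'d) (be :: nat \<Rightarrow> real^'n^'m).
           (\<forall>k. (Ws k, th k, be k) \<in> Sset \<sigma> A) \<and>
           (\<forall>(Zs :: nat \<Rightarrow> real^'n^'d) (Es :: nat \<Rightarrow> real^'n^'m) (Ls :: nat \<Rightarrow> real^'n^'m).
              Zs 0 = Z0 \<and> Es 0 = E0 \<and> Ls 0 = L0 \<and>
              (\<forall>k. dladmm_step f g A X (Ws k) (th k) (be k) (Zs k) (Es k) (Ls k)
                     (Zs (Suc k)) (Es (Suc k)) (Ls (Suc k)))
              \<longrightarrow> (\<exists>K. \<forall>k\<ge>K.
                     distH2 (Ws (Suc k)) (th (Suc k)) (be (Suc k)) A (solset f g A X)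
                        (Zs (Suc k), Es (Suc k), - Ls (Suc k))
                     \<le> distH2 (Ws k) (th k) (be k) A (solset f g A X) (Zs k, Es k, - Ls k)))"
proof -
  define S where "S = (\<Sum>k\<in>UNIV. \<Sum>i\<in>UNIV. (A$k$i)^2)"
  define th0 :: "real^'n^'d" where "th0 = (\<chi> i j. S + 1)"
  define be0 :: "real^'n^'m" where "be0 = (\<chi> i j. 1)"
  have S0: "0 \<le> S" unfolding S_def by (intro sum_nonneg) auto
  have thp: "\<forall>i j. th0$i$j > 0" using S0 by (simp add: th0_def)
  have bep: "\<forall>i j. be0$i$j > 0" by (simp add: be0_def)
  have Dform: "inner (Dop A th0 be0 A Z) Z = (S + 1) * inner Z Z - inner (A ** Z) (A ** Z)" for Z
  proof -
    have "had th0 Z = (S + 1) *\<^sub>R Z" by (simp add: th0_def vec_eq_iff)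
    moreover have "had be0 (A ** Z) = A ** Z" by (simp add: be0_def vec_eq_iff)
    ultimately show ?thesis by (simp add: Dop_def inner_diff_left inner_transpose)
  qed
  have psd': "inner (Dop A th0 be0 A Z) Z \<ge> inner Z Z" for Z
    using Dform[of Z] AZ_bound[of A Z] S0 unfolding S_def by (simp add: algebra_simps)
  have mS: "(A, th0, be0) \<in> Sset \<sigma> A"
  proof -
    have on: "onorm (\<lambda>x. (A - A) *v x) \<le> \<sigma>" using assms(5) by (simp add: onorm_zero)
    have pdZ: "\<forall>Z. Z \<noteq> 0 \<longrightarrow> inner (Dop A th0 be0 A Z) Z > 0"
    proof (intro allI impI)
      fix Z :: "real^'n^'d" assume "Z \<noteq> 0"
      then have "0 < inner Z Z" by simp
      then show "0 < inner (Dop A th0 be0 A Z) Z" using psd'[of Z] by linarith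
    qed
    show ?thesis unfolding Sset_def using on pdZ thp bep by blast
  qed
  have psd: "\<forall>Z. 0 \<le> inner (Dop A th0 be0 A Z) Z"
    using psd' order_trans[OF inner_ge_zero] by blast
  show ?thesis
  proof (intro exI[of _ "\<lambda>k. A"] exI[of _ "\<lambda>k. th0"] exI[of _ "\<lambda>k. be0"] conjI allI impI)
    show "\<And>k. ((\<lambda>k. A) k, (\<lambda>k. th0) k, (\<lambda>k. be0) k) \<in> Sset \<sigma> A" using mS by simp
  next
    fix Zs :: "nat \<Rightarrow> real^'n^'d" and Es Ls :: "nat \<Rightarrow> real^'n^'m"
    assume H: "Zs 0 = Z0 \<and> Es 0 = E0 \<and> Ls 0 = L0 \<and>
              (\<forall>k. dladmm_step f g A X ((\<lambda>k. A) k) ((\<lambda>k. th0) k) ((\<lambda>k. be0) k) (Zs k) (Es k) (Ls k)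
                     (Zs (Suc k)) (Es (Suc k)) (Ls (Suc k)))"
    have st: "\<And>k. dladmm_step f g A X A th0 be0 (Zs k) (Es k) (Ls k) (Zs (Suc k)) (Es (Suc k)) (Ls (Suc k))"
      using H by auto
    show "\<exists>K. \<forall>k\<ge>K.
                     distH2 ((\<lambda>k. A) (Suc k)) ((\<lambda>k. th0) (Suc k)) ((\<lambda>k. be0) (Suc k)) A (solset f g A X)
                        (Zs (Suc k), Es (Suc k), - Ls (Suc k))
                     \<le> distH2 ((\<lambda>k. A) k) ((\<lambda>k. th0) k) ((\<lambda>k. be0) k) A (solset f g A X) (Zs k, Es k, - Ls k)"
    proof (intro exI[of _ 0] allI impI)
      fix k :: nat
      show "distH2 ((\<lambda>k. A) (Suc k)) ((\<lambda>k. th0) (Suc k)) ((\<lambda>k. be0) (Suc k)) A (solset f g A X)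
                        (Zs (Suc k), Es (Suc k), - Ls (Suc k))
                     \<le> distH2 ((\<lambda>k. A) k) ((\<lambda>k. th0) k) ((\<lambda>k. be0) k) A (solset f g A X) (Zs k, Es k, - Ls k)"
        unfolding distH2_def
      proof (rule cInf_mono)
        show "(\<lambda>ws. Hnorm2 A th0 be0 A ((Zs k, Es k, - Ls k) - ws)) ` solset f g A X \<noteq> {}"
          using assms(4) by simp
        show "bdd_below ((\<lambda>ws. Hnorm2 A th0 be0 A ((Zs (Suc k), Es (Suc k), - Ls (Suc k)) - ws)) ` solset f g A X)"
          by (rule bdd_belowI[of _ 0]) (auto intro: Hnorm2_nonneg[OF psd bep])
        fix b assume "b \<in> (\<lambda>ws. Hnorm2 A th0 be0 A ((Zs k, Es k, - Ls k) - ws)) ` solset f g A X"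
        then obtain ws where ws: "ws \<in> solset f g A X" and b: "b = Hnorm2 A th0 be0 A ((Zs k, Es k, - Ls k) - ws)"
          by auto
        have "Hnorm2 A th0 be0 A ((Zs (Suc k), Es (Suc k), - Ls (Suc k)) - ws) \<le> b"
          unfolding b by (rule fejer[OF assms(1,2) thp bep psd st ws])
        then show "\<exists>a\<in>(\<lambda>ws. Hnorm2 A th0 be0 A ((Zs (Suc k), Es (Suc k), - Ls (Suc k)) - ws)) ` solset f g A X. a \<le> b"
          using ws by blast
      qed
    qed
  qed
qed

end
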